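(* Let $u, v: \mathbb{R}^d\times[0,1]\to\mathbb{R}^d$ be $C^2$ velocity fields and let $(p_t)_{t\in[0,1]}$, $(q_t)_{t\in[0,1]}$ be paths of differentiable, strictly positive probability densities on $\mathbb{R}^d$ satisfying $\partial_t p_t + \nabla\cdot(p_t u) = 0$ and $\partial_t q_t + \nabla\cdot(q_t v) = 0$, with $p_0 = q_0$. Suppose that for some $\epsilon>0$, $$\int_0^1 \mathbb{E}_{x\sim p_t}\big[\|u(x,t)-v(x,t)\|_2^2\big]\,dt \le \epsilon^2 .$$ Then $$\mathrm{KL}(p_1\|q_1) \le \epsilon \sqrt{\int_0^1 \mathbb{E}_{x\sim p_t}\big[\|\nabla\log p_t(x) - \nabla \log q_t(x)\|_2^2\big]\,dt}.$$
   Context: $\mathrm{KL}(p\|q) = \int p\log(p/q)\,dx$. Standing regularity convention: the densities and velocity fields are smooth enough and decay fast enough at infinity that differentiation under the integral sign is justified, all expectations appearing are finite, and integrations by parts over $\mathbb{R}^d$ produce no boundary terms. *)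

theory Defs
  imports "HOL-Analysis.Analysis"
begin

definition divergence :: "('a::euclidean_space \<Rightarrow> 'a) \<Rightarrow> 'a \<Rightarrow> real" where
  "divergence F x = (\<Sum>i\<in>Basis. (frechet_derivative F (at x) i) \<bullet> i)"

definition grad :: "('a::euclidean_space \<Rightarrow> real) \<Rightarrow> 'a \<Rightarrow> 'a" where
  "grad f x = (\<Sum>i\<in>Basis. frechet_derivative f (at x) i *\<^sub>R i)"

definition KL :: "('a::euclidean_space \<Rightarrow> real) \<Rightarrow> ('a \<Rightarrow> real) \<Rightarrow> real" where
  "KL p q = (\<integral>x. p x * ln (p x / q x) \<partial>lborel)"

definition expect :: "('a::euclidean_space \<Rightarrow> real) \<Rightarrow> ('a \<Rightarrow> real) \<Rightarrow> real" where
  "expect p f = (\<integral>x. p x * f x \<partial>lborel)"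

definition C2_on :: "'b::euclidean_space set \<Rightarrow> ('b \<Rightarrow> 'c::euclidean_space) \<Rightarrow> bool" where
  "C2_on S f \<longleftrightarrow> (\<exists>f' f''.
     (\<forall>z\<in>S. (f has_derivative blinfun_apply (f' z)) (at z within S)) \<and>
     (\<forall>z\<in>S. (f' has_derivative blinfun_apply (f'' z)) (at z within S)) \<and>
     continuous_on S f'')"

definition prob_density :: "('a::euclidean_space \<Rightarrow> real) \<Rightarrow> bool" where
  "prob_density p \<longleftrightarrow> p \<in> borel_measurable lborel \<and> (\<forall>x. 0 \<le> p x) \<and>
     integrable lborel p \<and> (\<integral>x. p x \<partial>lborel) = 1"

definition ibp_holds :: "('a::euclidean_space \<Rightarrow> real) \<Rightarrow> ('a \<Rightarrow> 'a) \<Rightarrow> bool" where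
  "ibp_holds f G \<longleftrightarrow>
     integrable lborel (\<lambda>x. f x * divergence G x) \<and>
     integrable lborel (\<lambda>x. grad f x \<bullet> G x) \<and>
     (\<integral>x. f x * divergence G x \<partial>lborel) = - (\<integral>x. grad f x \<bullet> G x \<partial>lborel)"

end

theory Submission imports Defs begin

lemma grad_of:
  fixes f :: "'a::euclidean_space \<Rightarrow> real"
  assumes "(f has_derivative f') (at x)"
  shows "grad f x = (\<Sum>i\<in>Basis. f' i *\<^sub>R i)"
  using frechet_derivative_at[OF assms] unfolding grad_def by simp

lemma grad_lin:
  fixes f :: "'a::euclidean_space \<Rightarrow> real"
  assumes "(f has_derivative (\<lambda>h. a * Dp h + b * Dq h)) (at x)"
  shows "grad f x = a *\<^sub>R (\<Sum>i\<in>Basis. Dp i *\<^sub>R i) + b *\<^sub>R (\<Sum>i\<in>Basis. Dq i *\<^sub>R i)"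
  unfolding grad_of[OF assms] by (simp add: scaleR_sum_right scaleR_add_left sum.distrib)

lemma grad_ln_div:
  fixes p q :: "'a::euclidean_space \<Rightarrow> real"
  assumes "p differentiable (at x)" "q differentiable (at x)" "p x > 0" "q x > 0"
  shows "grad (\<lambda>y. ln (p y / q y)) x = (1 / p x) *\<^sub>R grad p x + (- 1 / q x) *\<^sub>R grad q x"
proof -
  let ?Dp = "frechet_derivative p (at x)" and ?Dq = "frechet_derivative q (at x)"
  have hp: "(p has_derivative ?Dp) (at x)" using assms(1) frechet_derivative_works by blast
  have hq: "(q has_derivative ?Dq) (at x)" using assms(2) frechet_derivative_works by blast
  note d1 = has_derivative_divide'[OF hp hq]
  have "((\<lambda>y. ln (p y / q y)) has_derivative (\<lambda>h. (1 / p x) * ?Dp h + (- 1 / q x) * ?Dq h)) (at x)"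
    apply (rule has_derivative_eq_rhs[OF DERIV_compose_FDERIV[OF DERIV_ln d1]])
    using assms by (auto simp: field_simps)
  from grad_lin[OF this] show ?thesis unfolding grad_def by simp
qed

lemma grad_div:
  fixes p q :: "'a::euclidean_space \<Rightarrow> real"
  assumes "p differentiable (at x)" "q differentiable (at x)" "q x > 0"
  shows "grad (\<lambda>y. p y / q y) x = (1 / q x) *\<^sub>R grad p x + (- p x / (q x)^2) *\<^sub>R grad q x"
proof -
  let ?Dp = "frechet_derivative p (at x)" and ?Dq = "frechet_derivative q (at x)"
  have hp: "(p has_derivative ?Dp) (at x)" using assms(1) frechet_derivative_works by blast
  have hq: "(q has_derivative ?Dq) (at x)" using assms(2) frechet_derivative_works by blast
  have "((\<lambda>y. p y / q y) has_derivative (\<lambda>h. (1 / q x) * ?Dp h + (- p x / (q x)^2) * ?Dq h)) (at x)"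
    apply (rule has_derivative_eq_rhs[OF has_derivative_divide'[OF hp hq]])
    using assms by (auto simp: field_simps power2_eq_square)
  from grad_lin[OF this] show ?thesis unfolding grad_def by simp
qed

lemma grad_ln:
  fixes p :: "'a::euclidean_space \<Rightarrow> real"
  assumes "p differentiable (at x)" "p x > 0"
  shows "grad (\<lambda>y. ln (p y)) x = (1 / p x) *\<^sub>R grad p x"
proof -
  let ?Dp = "frechet_derivative p (at x)"
  have hp: "(p has_derivative ?Dp) (at x)" using assms(1) frechet_derivative_works by blast
  have "((\<lambda>y. ln (p y)) has_derivative (\<lambda>h. (1 / p x) * ?Dp h + 0 * ?Dp h)) (at x)"
    apply (rule has_derivative_eq_rhs[OF DERIV_compose_FDERIV[OF DERIV_ln hp]])
    using assms by (auto simp: field_simps)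
  from grad_lin[OF this] show ?thesis unfolding grad_def by simp
qed

lemma grad_const: "grad (\<lambda>_. c) (x::'a::euclidean_space) = 0"
  using grad_of[OF has_derivative_const[of c "at x"]] by simp

lemma young_inner:
  fixes s w :: "'a::real_inner"
  assumes "l > 0"
  shows "s \<bullet> w \<le> l / 2 * (norm s)\<^sup>2 + 1 / (2 * l) * (norm w)\<^sup>2"
proof -
  have "0 \<le> (norm (l *\<^sub>R s - w))\<^sup>2" by simp
  also have "\<dots> = l^2 * (norm s)\<^sup>2 - 2 * l * (s \<bullet> w) + (norm w)\<^sup>2"
    unfolding power2_norm_eq_inner by (simp add: inner_diff_left inner_diff_right inner_commute power2_eq_square algebra_simps)
  finally have "2 * l * (s \<bullet> w) \<le> l^2 * (norm s)\<^sup>2 + (norm w)\<^sup>2" by simp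
  then show ?thesis using assms by (simp add: field_simps power2_eq_square)
qed

lemma opt_bound:
  fixes k S E e :: real
  assumes h: "\<And>l. l > 0 \<Longrightarrow> k \<le> l / 2 * S + 1 / (2 * l) * E"
    and S: "S \<ge> 0" and E: "E \<le> e\<^sup>2" and e: "e > 0"
  shows "k \<le> e * sqrt S"
proof -
  have h2: "k \<le> l / 2 * S + 1 / (2 * l) * e\<^sup>2" if "l > 0" for l
  proof -
    have "1 / (2 * l) * E \<le> 1 / (2 * l) * e\<^sup>2" using E that by (intro mult_left_mono) auto
    then show ?thesis using h[OF that] by linarith
  qed
  show ?thesis
  proof (cases "S = 0")
    case True
    show ?thesis
    proof (rule ccontr)
      assume "\<not> ?thesis"
      then have k0: "k > 0" using True by simp
      have "k \<le> 1 / (2 * (e\<^sup>2 / k)) * e\<^sup>2" using h2[of "e\<^sup>2 / k"] k0 e True by simp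
      also have "\<dots> = k / 2" using e k0 by (simp add: field_simps)
      finally show False using k0 by simp
    qed
  next
    case False
    then have Sp: "S > 0" using S by simp
    let ?l = "e / sqrt S"
    have "k \<le> ?l / 2 * S + 1 / (2 * ?l) * e\<^sup>2" using h2[of ?l] Sp e by simp
    also have "\<dots> = e * sqrt S"
    proof -
      have s: "sqrt S * sqrt S = S" using Sp by simp
      have "?l / 2 * S = e * sqrt S / 2" using Sp s by (simp add: field_simps)
      moreover have "1 / (2 * ?l) * e\<^sup>2 = e * sqrt S / 2" using Sp e by (simp add: field_simps power2_eq_square)
      ultimately show ?thesis by linarith
    qed
    finally show ?thesis .
  qed
qed

theorem theorem3p6:
  fixes u v :: "'a::euclidean_space \<Rightarrow> real \<Rightarrow> 'a"
    and p q :: "real \<Rightarrow> 'a \<Rightarrow> real"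
    and \<epsilon> :: real
  assumes u_C2: "C2_on (UNIV \<times> {0..1}) (\<lambda>(x, t). u x t)"
    and v_C2: "C2_on (UNIV \<times> {0..1}) (\<lambda>(x, t). v x t)"
    and p_dens: "\<forall>t\<in>{0..1}. prob_density (p t)"
    and q_dens: "\<forall>t\<in>{0..1}. prob_density (q t)"
    and p_pos: "\<forall>t\<in>{0..1}. \<forall>x. 0 < p t x"
    and q_pos: "\<forall>t\<in>{0..1}. \<forall>x. 0 < q t x"
    and p_diff: "\<forall>t\<in>{0..1}. \<forall>x. p t differentiable (at x)"
    and q_diff: "\<forall>t\<in>{0..1}. \<forall>x. q t differentiable (at x)"
    \<comment> \<open>continuity equations: d/dt p_t(x) = - div(p_t u_t)(x), likewise for q, v\<close>
    and p_cont: "\<forall>t\<in>{0..1}. \<forall>x. ((\<lambda>s. p s x) has_real_derivative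
                    - divergence (\<lambda>y. p t y *\<^sub>R u y t) x) (at t within {0..1})"
    and q_cont: "\<forall>t\<in>{0..1}. \<forall>x. ((\<lambda>s. q s x) has_real_derivative
                    - divergence (\<lambda>y. q t y *\<^sub>R v y t) x) (at t within {0..1})"
    and init: "p 0 = q 0"
    and eps_pos: "\<epsilon> > 0"
    and flow_err: "(\<integral>t\<in>{0..1}. expect (p t) (\<lambda>x. (norm (u x t - v x t))\<^sup>2) \<partial>lborel) \<le> \<epsilon>\<^sup>2"
    \<comment> \<open>standing regularity convention: differentiation under the integral sign is justified\<close>
    and diff_under_int: "\<forall>t\<in>{0..1}. \<forall>D. (\<forall>x. ((\<lambda>s. p s x * ln (p s x / q s x))
                    has_real_derivative D x) (at t within {0..1})) \<longrightarrow>
                 ((\<lambda>s. KL (p s) (q s)) has_real_derivative (\<integral>x. D x \<partial>lborel)) (at t within {0..1})"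
    \<comment> \<open>standing regularity convention: integrations by parts produce no boundary terms\<close>
    and ibp1: "\<forall>t\<in>{0..1}. ibp_holds (\<lambda>_. 1) (\<lambda>x. p t x *\<^sub>R u x t)"
    and ibp2: "\<forall>t\<in>{0..1}. ibp_holds (\<lambda>x. ln (p t x / q t x)) (\<lambda>x. p t x *\<^sub>R u x t)"
    and ibp3: "\<forall>t\<in>{0..1}. ibp_holds (\<lambda>x. p t x / q t x) (\<lambda>x. q t x *\<^sub>R v x t)"
    \<comment> \<open>standing regularity convention: all expectations appearing are finite\<close>
    and fin_kl: "\<forall>t\<in>{0..1}. integrable lborel (\<lambda>x. p t x * ln (p t x / q t x))"
    and fin_flow: "\<forall>t\<in>{0..1}. integrable lborel (\<lambda>x. p t x * (norm (u x t - v x t))\<^sup>2)"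
    and fin_score: "\<forall>t\<in>{0..1}. integrable lborel
                 (\<lambda>x. p t x * (norm (grad (\<lambda>y. ln (p t y)) x - grad (\<lambda>y. ln (q t y)) x))\<^sup>2)"
    and fin_flow_t: "set_integrable lborel {0..1}
                 (\<lambda>t. expect (p t) (\<lambda>x. (norm (u x t - v x t))\<^sup>2))"
    and fin_score_t: "set_integrable lborel {0..1}
                 (\<lambda>t. expect (p t) (\<lambda>x. (norm (grad (\<lambda>y. ln (p t y)) x - grad (\<lambda>y. ln (q t y)) x))\<^sup>2))"
  shows "KL (p 1) (q 1) \<le> \<epsilon> * sqrt (\<integral>t\<in>{0..1}.
           expect (p t) (\<lambda>x. (norm (grad (\<lambda>y. ln (p t y)) x - grad (\<lambda>y. ln (q t y)) x))\<^sup>2) \<partial>lborel)"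
proof -
  define A where "A t = expect (p t) (\<lambda>x. (norm (grad (\<lambda>y. ln (p t y)) x - grad (\<lambda>y. ln (q t y)) x))\<^sup>2)" for t
  define B where "B t = expect (p t) (\<lambda>x. (norm (u x t - v x t))\<^sup>2)" for t
  define F where "F t = KL (p t) (q t)" for t
  define dp where "dp t x = - divergence (\<lambda>y. p t y *\<^sub>R u y t) x" for t x
  define dq where "dq t x = - divergence (\<lambda>y. q t y *\<^sub>R v y t) x" for t x
  define Dt where "Dt t x = dp t x * ln (p t x / q t x) + dp t x - p t x * dq t x / q t x" for t x
  define K where "K t = (\<integral>x. Dt t x \<partial>lborel)" for t
  have main: "KL (p 1) (q 1) \<le> l / 2 * (\<integral>t\<in>{0..1}. A t \<partial>lborel) + 1 / (2 * l) * (\<integral>t\<in>{0..1}. B t \<partial>lborel)"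
    if l: "l > 0" for l
  proof -
    define H where "H t = l / 2 * A t + 1 / (2 * l) * B t" for t
    have step: "(F has_real_derivative K t) (at t within {0..1}) \<and> K t \<le> H t" if t: "t \<in> {0..1}" for t
    proof
      have dx: "((\<lambda>s. p s x * ln (p s x / q s x)) has_real_derivative Dt t x) (at t within {0..1})" for x
      proof -
        have P: "p t x > 0" and Q: "q t x > 0" using p_pos q_pos t by auto
        have hp: "((\<lambda>s. p s x) has_real_derivative dp t x) (at t within {0..1})"
          using p_cont t unfolding dp_def by blast
        have hq: "((\<lambda>s. q s x) has_real_derivative dq t x) (at t within {0..1})"
          using q_cont t unfolding dq_def by blast
        have hl: "((\<lambda>s. ln (p s x / q s x)) has_real_derivative
              inverse (p t x / q t x) * ((dp t x * q t x - p t x * dq t x) / (q t x * q t x))) (at t within {0..1})"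
          by (rule DERIV_chain2[OF DERIV_ln DERIV_divide[OF hp hq]]) (use P Q in auto)
        show ?thesis
          by (rule DERIV_cong[OF DERIV_mult[OF hp hl]]) (use P Q in \<open>simp add: Dt_def field_simps\<close>)
      qed
      show "(F has_real_derivative K t) (at t within {0..1})"
        unfolding F_def K_def using diff_under_int t dx by blast
      show "K t \<le> H t"
      proof -
        have P: "\<And>x. p t x > 0" and Q: "\<And>x. q t x > 0" using p_pos q_pos t by auto
        have dP: "\<And>x. p t differentiable (at x)" and dQ: "\<And>x. q t differentiable (at x)"
          using p_diff q_diff t by auto
        define div1 where "div1 x = divergence (\<lambda>x. p t x *\<^sub>R u x t) x" for x
        define div3 where "div3 x = divergence (\<lambda>x. q t x *\<^sub>R v x t) x" for x
        define g1 where "g1 x = grad (\<lambda>_. 1) x \<bullet> (p t x *\<^sub>R u x t)" for x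
        define g2 where "g2 x = grad (\<lambda>x. ln (p t x / q t x)) x \<bullet> (p t x *\<^sub>R u x t)" for x
        define g3 where "g3 x = grad (\<lambda>x. p t x / q t x) x \<bullet> (q t x *\<^sub>R v x t)" for x
        define sc where "sc x = grad (\<lambda>y. ln (p t y)) x - grad (\<lambda>y. ln (q t y)) x" for x
        have i1: "integrable lborel (\<lambda>x. 1 * div1 x)" "integrable lborel g1"
          "(\<integral>x. 1 * div1 x \<partial>lborel) = - (\<integral>x. g1 x \<partial>lborel)"
          using ibp1 t unfolding ibp_holds_def div1_def g1_def by auto
        have i2: "integrable lborel (\<lambda>x. ln (p t x / q t x) * div1 x)" "integrable lborel g2"
          "(\<integral>x. ln (p t x / q t x) * div1 x \<partial>lborel) = - (\<integral>x. g2 x \<partial>lborel)"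
          using ibp2 t unfolding ibp_holds_def div1_def g2_def by auto
        have i3: "integrable lborel (\<lambda>x. p t x / q t x * div3 x)" "integrable lborel g3"
          "(\<integral>x. p t x / q t x * div3 x \<partial>lborel) = - (\<integral>x. g3 x \<partial>lborel)"
          using ibp3 t unfolding ibp_holds_def div3_def g3_def by auto
        have g10: "g1 x = 0" for x unfolding g1_def grad_const by simp
        have Deq: "Dt t x = - (ln (p t x / q t x) * div1 x) - (1 * div1 x) + (p t x / q t x * div3 x)" for x
          using Q[of x] unfolding Dt_def dp_def dq_def div1_def div3_def by (simp add: field_simps)
        have "K t = - (\<integral>x. ln (p t x / q t x) * div1 x \<partial>lborel) - (\<integral>x. 1 * div1 x \<partial>lborel)
                 + (\<integral>x. p t x / q t x * div3 x \<partial>lborel)"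
          unfolding K_def Deq using i1 i2 i3 by simp
        also have "\<dots> = (\<integral>x. g2 x \<partial>lborel) - (\<integral>x. g3 x \<partial>lborel)"
          using i1(3) i2(3) i3(3) g10 by simp
        also have "\<dots> = (\<integral>x. g2 x - g3 x \<partial>lborel)" using i2(2) i3(2) by simp
        also have "\<dots> \<le> (\<integral>x. l / 2 * (p t x * (norm (sc x))\<^sup>2) + 1 / (2 * l) * (p t x * (norm (u x t - v x t))\<^sup>2) \<partial>lborel)"
        proof (rule integral_mono)
          show "integrable lborel (\<lambda>x. g2 x - g3 x)" using i2(2) i3(2) by simp
          show "integrable lborel (\<lambda>x. l / 2 * (p t x * (norm (sc x))\<^sup>2) + 1 / (2 * l) * (p t x * (norm (u x t - v x t))\<^sup>2))"
            using fin_score fin_flow t unfolding sc_def by auto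
          fix x
          have e1: "grad (\<lambda>x. ln (p t x / q t x)) x = (1 / p t x) *\<^sub>R grad (p t) x + (- 1 / q t x) *\<^sub>R grad (q t) x"
            using grad_ln_div[OF dP dQ P Q] .
          have e2: "grad (\<lambda>x. p t x / q t x) x = (1 / q t x) *\<^sub>R grad (p t) x + (- p t x / (q t x)^2) *\<^sub>R grad (q t) x"
            using grad_div[OF dP dQ Q] .
          have e3: "sc x = (1 / p t x) *\<^sub>R grad (p t) x - (1 / q t x) *\<^sub>R grad (q t) x"
            unfolding sc_def grad_ln[OF dP P] grad_ln[OF dQ Q] ..
          have "g2 x - g3 x = p t x * (sc x \<bullet> (u x t - v x t))"
            unfolding g2_def g3_def e1 e2 e3 using P[of x] Q[of x]
            by (simp add: inner_add_left inner_diff_left inner_diff_right field_simps power2_eq_square)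
          also have "\<dots> \<le> p t x * (l / 2 * (norm (sc x))\<^sup>2 + 1 / (2 * l) * (norm (u x t - v x t))\<^sup>2)"
            using young_inner[OF l] P[of x] by (intro mult_left_mono) auto
          finally show "g2 x - g3 x \<le> l / 2 * (p t x * (norm (sc x))\<^sup>2) + 1 / (2 * l) * (p t x * (norm (u x t - v x t))\<^sup>2)"
            by (simp add: algebra_simps)
        qed
        also have "\<dots> = H t"
          unfolding H_def A_def B_def expect_def sc_def using fin_score fin_flow t by simp
        finally show ?thesis .
      qed
    qed
have F0: "F 0 = 0"
      proof -
      have "(\<lambda>x. q 0 x * ln (q 0 x / q 0 x)) = (\<lambda>x. 0)"
        by (rule ext) (case_tac "q 0 x = 0", auto)
      then show ?thesis unfolding F_def KL_def using init by simp
    qed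
    have ftc: "(K has_integral (F 1 - F 0)) {0..1}"
      by (rule fundamental_theorem_of_calculus)
        (use step in \<open>auto simp: has_real_derivative_iff_has_vector_derivative[symmetric]\<close>)
    have Aeq: "(\<lambda>t. expect (p t) (\<lambda>x. (norm (grad (\<lambda>y. ln (p t y)) x - grad (\<lambda>y. ln (q t y)) x))\<^sup>2)) = A"
      by (simp add: A_def fun_eq_iff)
    have Beq: "(\<lambda>t. expect (p t) (\<lambda>x. (norm (u x t - v x t))\<^sup>2)) = B"
      by (simp add: B_def fun_eq_iff)
    have sA: "set_integrable lborel {0..1} A" using fin_score_t unfolding Aeq .
    have sB: "set_integrable lborel {0..1} B" using fin_flow_t unfolding Beq .
    have hA: "(A has_integral (\<integral>t\<in>{0..1}. A t \<partial>lborel)) {0..1}"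
      using set_borel_integral_eq_integral[OF sA] by auto
    have hB: "(B has_integral (\<integral>t\<in>{0..1}. B t \<partial>lborel)) {0..1}"
      using set_borel_integral_eq_integral[OF sB] by auto
    have hH: "(H has_integral (l / 2 * (\<integral>t\<in>{0..1}. A t \<partial>lborel) + 1 / (2 * l) * (\<integral>t\<in>{0..1}. B t \<partial>lborel))) {0..1}"
      unfolding H_def by (intro has_integral_add has_integral_mult_right hA hB)
    have "F 1 - F 0 \<le> l / 2 * (\<integral>t\<in>{0..1}. A t \<partial>lborel) + 1 / (2 * l) * (\<integral>t\<in>{0..1}. B t \<partial>lborel)"
      by (rule has_integral_le[OF ftc hH]) (use step in auto)
    then show ?thesis using F0 unfolding F_def by simp
  qed
have Beq0: "(\<lambda>t. expect (p t) (\<lambda>x. (norm (u x t - v x t))\<^sup>2)) = B"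
    by (simp add: B_def fun_eq_iff)
  have Anonneg: "0 \<le> (\<integral>t\<in>{0..1}. A t \<partial>lborel)"
    unfolding set_lebesgue_integral_def
  proof (rule integral_nonneg_AE, rule AE_I2)
    fix t :: real
    show "0 \<le> indicator {0..1} t *\<^sub>R A t"
    proof (cases "t \<in> {0..1}")
      case True
      then have "\<forall>x. 0 \<le> p t x" using p_dens unfolding prob_density_def by auto
      then have "0 \<le> A t" unfolding A_def expect_def by (intro integral_nonneg_AE AE_I2) auto
      then show ?thesis by simp
    qed simp
  qed
  have "KL (p 1) (q 1) \<le> \<epsilon> * sqrt (\<integral>t\<in>{0..1}. A t \<partial>lborel)"
    by (rule opt_bound[OF main Anonneg flow_err[unfolded Beq0] eps_pos])
  then show ?thesis unfolding A_def .
qed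

end
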